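(* Let $f:\mathbb{R}^n\to\mathbb{R}\cup\{+\infty\}$ have a nonempty convex domain and let $S:\mathbb{R}^n\to\mathbb{R}\cup\{+\infty\}$ be even. If $f$ is directionally $S$-smooth, then for all $x_0,x_1\in\mathrm{dom}\,f$ and all $y_0\in\partial f(x_0)$, $y_1\in\partial f(x_1)$, \[ S^*(y_1-y_0)\le S(x_1-x_0). \]
   Context: $f$ is directionally $S$-smooth if $f((1-t)x_0+tx_1)+t(1-t)S(x_1-x_0)\ge(1-t)f(x_0)+tf(x_1)$ for all $t\in(0,1)$ and all $x_0,x_1\in\mathbb{R}^n$ with $(1-t)x_0+tx_1\in\mathrm{dom} f$. The subdifferential $\partial f(x)$ is the set of $a\in\mathbb{R}^n$ with $f(y)\ge f(x)+\langle a,y-x\rangle$ for all $y\in\mathbb{R}^n$ (possibly empty, $f$ not assumed convex). $S^*(v)=\sup_{u\in\mathbb{R}^n}\{\langle u,v\rangle-S(u)\}$. *)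

theory Defs
  imports "HOL-Analysis.Analysis"
begin

text \<open>Extended-real-valued functions into R \<union> {+\<infinity>} are modelled as functions into
  ereal that never take the value -\<infinity>.\<close>

definition edom :: "('a \<Rightarrow> ereal) \<Rightarrow> 'a set" where
  "edom f = {x. f x < \<infinity>}"

definition directionally_smooth :: "('a::real_vector \<Rightarrow> ereal) \<Rightarrow> ('a \<Rightarrow> ereal) \<Rightarrow> bool" where
  "directionally_smooth S f \<longleftrightarrow>
     (\<forall>t::real. \<forall>x0 x1. 0 < t \<and> t < 1 \<and> (1 - t) *\<^sub>R x0 + t *\<^sub>R x1 \<in> edom f \<longrightarrow>
        f ((1 - t) *\<^sub>R x0 + t *\<^sub>R x1) + ereal (t * (1 - t)) * S (x1 - x0)
          \<ge> ereal (1 - t) * f x0 + ereal t * f x1)"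

definition subdiff :: "('a::real_inner \<Rightarrow> ereal) \<Rightarrow> 'a \<Rightarrow> 'a set" where
  "subdiff f x = {a. \<forall>y. f y \<ge> f x + ereal (inner a (y - x))}"

definition fconj :: "('a::real_inner \<Rightarrow> ereal) \<Rightarrow> 'a \<Rightarrow> ereal" where
  "fconj S v = (SUP u. ereal (inner u v) - S u)"

end

theory Submission
  imports Defs
begin

lemma key:
  fixes f S :: "'a::euclidean_space \<Rightarrow> ereal"
  assumes f_proper: "\<And>x. f x \<noteq> -\<infinity>"
    and smooth: "directionally_smooth S f"
    and x1: "x1 \<in> edom f"
    and y0: "y0 \<in> subdiff f x0" and y1: "y1 \<in> subdiff f x1"
    and Sv: "S v = ereal s" and f0: "f x0 = ereal f0" and f1: "f x1 = ereal f1"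
  shows "inner (y1 - y0) v - s \<le> f1 - f0 - inner y0 (x1 - x0)"
proof (rule field_le_mult_one_interval)
  fix t :: real assume t: "0 < t" "t < 1"
  define a where "a = x1 - t *\<^sub>R v"
  define b where "b = x1 + (1 - t) *\<^sub>R v"
  have m: "(1 - t) *\<^sub>R a + t *\<^sub>R b = x1"
    by (simp add: a_def b_def algebra_simps)
  have ba: "b - a = v" by (simp add: a_def b_def algebra_simps)
  have sm: "f x1 + ereal (t * (1 - t)) * S v \<ge> ereal (1 - t) * f a + ereal t * f b"
  proof -
    have "f ((1 - t) *\<^sub>R a + t *\<^sub>R b) + ereal (t * (1 - t)) * S (b - a)
          \<ge> ereal (1 - t) * f a + ereal t * f b"
      using smooth t x1 m unfolding directionally_smooth_def
      by (metis (no_types, lifting))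
    thus ?thesis by (simp only: m ba)
  qed
  have fa: "f a \<ge> ereal (f0 + inner y0 (a - x0))"
    using y0 f0 unfolding subdiff_def by auto
  have fb: "f b \<ge> ereal (f1 + inner y1 (b - x1))"
    using y1 f1 unfolding subdiff_def by auto
  have "ereal (1 - t) * f a \<ge> ereal (1 - t) * ereal (f0 + inner y0 (a - x0))"
    using fa t by (intro ereal_mult_left_mono) auto
  moreover have "ereal t * f b \<ge> ereal t * ereal (f1 + inner y1 (b - x1))"
    using fb t by (intro ereal_mult_left_mono) auto
  ultimately have "ereal (1 - t) * ereal (f0 + inner y0 (a - x0)) + ereal t * ereal (f1 + inner y1 (b - x1))
      \<le> ereal (1 - t) * f a + ereal t * f b"
    by (rule add_mono)
  also have "\<dots> \<le> ereal (f1 + t * (1 - t) * s)"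
    using sm f1 Sv by simp
  finally have "ereal ((1 - t) * (f0 + inner y0 (a - x0)) + t * (f1 + inner y1 (b - x1)))
      \<le> ereal (f1 + t * (1 - t) * s)" by simp
  hence ineq: "(1 - t) * (f0 + inner y0 (a - x0)) + t * (f1 + inner y1 (b - x1)) \<le> f1 + t * (1 - t) * s"
    by simp
  have "inner y0 (a - x0) = inner y0 (x1 - x0) - t * inner y0 v"
    by (simp add: a_def inner_diff_right)
  moreover have "inner y1 (b - x1) = (1 - t) * inner y1 v"
    by (simp add: b_def)
  ultimately have "(1 - t) * (f0 + inner y0 (x1 - x0) - t * inner y0 v) + t * (f1 + (1 - t) * inner y1 v) \<le> f1 + t * (1 - t) * s"
    using ineq by (simp add: diff_add_eq add_diff_eq)
  hence "(1 - t) * (t * (inner (y1 - y0) v - s)) \<le> (1 - t) * (f1 - f0 - inner y0 (x1 - x0))"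
    by (simp add: inner_diff_left algebra_simps)
  thus "t * (inner (y1 - y0) v - s) \<le> f1 - f0 - inner y0 (x1 - x0)"
    using t by simp
qed


theorem proposition2p12:
  fixes f S :: "'a::euclidean_space \<Rightarrow> ereal"
  assumes f_proper: "\<And>x. f x \<noteq> -\<infinity>"
    and S_proper: "\<And>u. S u \<noteq> -\<infinity>"
    and dom_nonempty: "edom f \<noteq> {}"
    and dom_convex: "convex (edom f)"
    and S_even: "\<And>u. S (- u) = S u"
    and smooth: "directionally_smooth S f"
    and x0: "x0 \<in> edom f" and x1: "x1 \<in> edom f"
    and y0: "y0 \<in> subdiff f x0" and y1: "y1 \<in> subdiff f x1"
  shows "fconj S (y1 - y0) \<le> S (x1 - x0)"
proof -
  obtain f0 where f0: "f x0 = ereal f0"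
    using x0 f_proper unfolding edom_def by (cases "f x0") auto
  obtain f1 where f1: "f x1 = ereal f1"
    using x1 f_proper unfolding edom_def by (cases "f x1") auto
  have K0: "\<And>v s. S v = ereal s \<Longrightarrow> inner (y1 - y0) v - s \<le> f1 - f0 - inner y0 (x1 - x0)"
    using key[OF f_proper smooth x1 y0 y1 _ f0 f1] by blast
  have K1: "\<And>v s. S v = ereal s \<Longrightarrow> inner (y0 - y1) v - s \<le> f0 - f1 - inner y1 (x0 - x1)"
    using key[OF f_proper smooth x0 y1 y0 _ f1 f0] by blast
  have sum: "(f1 - f0 - inner y0 (x1 - x0)) + (f0 - f1 - inner y1 (x0 - x1)) = inner (y1 - y0) (x1 - x0)"
    by (simp add: inner_diff_left inner_diff_right algebra_simps)
  show ?thesis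
    unfolding fconj_def
  proof (rule SUP_least)
    fix u
    show "ereal (inner u (y1 - y0)) - S u \<le> S (x1 - x0)"
    proof (cases "S (x1 - x0) = \<infinity>")
      case True thus ?thesis by simp
    next
      case False
      then obtain sd where sd: "S (x1 - x0) = ereal sd" using S_proper by (cases "S (x1 - x0)") auto
      show ?thesis
      proof (cases "S u = \<infinity>")
        case True thus ?thesis by simp
      next
        case False
        then obtain su where su: "S u = ereal su" using S_proper by (cases "S u") auto
        have su': "S (- u) = ereal su" using S_even su by simp
        have sd': "S (- (x1 - x0)) = ereal sd" using S_even[of "x1 - x0"] sd by (simp only:)
        have a1: "inner (y1 - y0) u - su \<le> f1 - f0 - inner y0 (x1 - x0)" using K0[OF su] .
        have a2: "inner (y0 - y1) (- u) - su \<le> f0 - f1 - inner y1 (x0 - x1)" using K1[OF su'] .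
        have a3: "inner (y1 - y0) (x1 - x0) - sd \<le> f1 - f0 - inner y0 (x1 - x0)" using K0[OF sd] .
        have a4: "inner (y0 - y1) (- (x1 - x0)) - sd \<le> f0 - f1 - inner y1 (x0 - x1)" using K1[OF sd'] .
        have e1: "inner (y0 - y1) (- u) = inner (y1 - y0) u"
          by (simp add: inner_diff_left)
        have e2: "inner (y0 - y1) (- (x1 - x0)) = inner (y1 - y0) (x1 - x0)"
          by (simp add: inner_diff_left inner_diff_right)
        have "inner u (y1 - y0) - su \<le> sd"
          using a1 a2 a3 a4 e1 e2 sum by (simp add: inner_commute)
        thus ?thesis using su sd by simp
      qed
    qed
  qed
qed

end
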